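(* For all integers $k > d \geq 1$ and every $\varepsilon > 0$ there exists $\beta_0 > 0$ such that for every $0 < \beta \leq \beta_0$ there exists $\rho_0 > 0$ such that for every $0 < \rho \leq \rho_0$ there exists $n_0$ such that the following holds for all $n \geq n_0$. Let $H$ be a $k$-graph on $n$ vertices with $\delta_d(H) \geq (1/2 + \varepsilon)\binom{n-d}{k-d}$. Then there exists a set $\mathcal{A}$ of at most $\beta n$ pairwise vertex-disjoint absorbing tuples of $H$ such that for every ordered $k$-tuple $(w, w_1, \dots, w_{k-1})$ of distinct vertices of $H$ we have $|A(w, w_1, \dots, w_{k-1}) \cap \mathcal{A}| \geq \rho n$.
   Context: $\delta_d(H)$ is the minimum over $d$-subsets $S \subseteq V(H)$ of the number of edges containing $S$. For vertices $x, y$ of a $k$-graph $H$, an $(x,y)$-diamond is a pair of edges $e, f$ of $H$ with $|e \cap f| = k-1$, $x \in e \setminus f$ and $y \in f \setminus e$; the edge $f$ (the one containing $y$) is called the half-diamond of this diamond containing $y$. For an ordered $k$-tuple $(w, w_1, \dots, w_{k-1})$ of distinct vertices, an absorbing tuple for it is a tuple $(f_1, \dots, f_{k-1})$ of edges of $H$ such that there are vertices $v_1,\dots,v_{k-1}$ with: for each $i$, $f_i$ is the half-diamond containing $v_i$ of some $(w_i, v_i)$-diamond; the edges $f_1, \dots, f_{k-1}$ are pairwise vertex-disjoint; and $\{w, v_1, \dots, v_{k-1}\} \in E(H)$. $A(w, w_1,\dots,w_{k-1})$ is the set of all absorbing tuples for $(w, w_1, \dots, w_{k-1})$. Two absorbing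 tuples are vertex-disjoint if the unions of their edges are disjoint. *)

theory Defs
  imports Complex_Main
begin

definition kgraph :: "nat \<Rightarrow> 'a set \<Rightarrow> 'a set set \<Rightarrow> bool" where
  "kgraph k V E \<longleftrightarrow> finite V \<and> (\<forall>e\<in>E. e \<subseteq> V \<and> card e = k)"

definition min_deg :: "'a set \<Rightarrow> 'a set set \<Rightarrow> nat \<Rightarrow> nat" where
  "min_deg V E d = Min {card {e \<in> E. S \<subseteq> e} | S. S \<subseteq> V \<and> card S = d}"

definition diamond :: "nat \<Rightarrow> 'a set set \<Rightarrow> 'a \<Rightarrow> 'a \<Rightarrow> 'a set \<Rightarrow> 'a set \<Rightarrow> bool" where
  "diamond k E x y e f \<longleftrightarrow> e \<in> E \<and> f \<in> E \<and> card (e \<inter> f) = k - 1 \<and>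
     x \<in> e - f \<and> y \<in> f - e"

text \<open>Absorbing tuple (f_1,...,f_{k-1}) (list of length k-1) for the ordered
  k-tuple (w, w_1, ..., w_{k-1}) (ws = [w_1,...,w_{k-1}]).\<close>
definition absorbing :: "nat \<Rightarrow> 'a set set \<Rightarrow> 'a \<Rightarrow> 'a list \<Rightarrow> 'a set list \<Rightarrow> bool" where
  "absorbing k E w ws fs \<longleftrightarrow> length fs = k - 1 \<and> set fs \<subseteq> E \<and>
     (\<exists>vs. length vs = k - 1 \<and>
        (\<forall>i < k - 1. \<exists>e. diamond k E (ws ! i) (vs ! i) e (fs ! i)) \<and>
        (\<forall>i < k - 1. \<forall>j < k - 1. i \<noteq> j \<longrightarrow> fs ! i \<inter> fs ! j = {}) \<and>
        insert w (set vs) \<in> E)"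

definition absorbing_set :: "nat \<Rightarrow> 'a set set \<Rightarrow> 'a \<Rightarrow> 'a list \<Rightarrow> 'a set list set" where
  "absorbing_set k E w ws = {fs. absorbing k E w ws fs}"

definition ordered_tuple :: "nat \<Rightarrow> 'a set \<Rightarrow> 'a \<Rightarrow> 'a list \<Rightarrow> bool" where
  "ordered_tuple k V w ws \<longleftrightarrow> length ws = k - 1 \<and> distinct (w # ws) \<and> set (w # ws) \<subseteq> V"

definition absorbing_tuple_of :: "nat \<Rightarrow> 'a set \<Rightarrow> 'a set set \<Rightarrow> 'a set list \<Rightarrow> bool" where
  "absorbing_tuple_of k V E fs \<longleftrightarrow>
     (\<exists>w ws. ordered_tuple k V w ws \<and> absorbing k E w ws fs)"

definition tuples_vertex_disjoint :: "'a set list set \<Rightarrow> bool" where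
  "tuples_vertex_disjoint \<A> \<longleftrightarrow>
     (\<forall>T\<in>\<A>. \<forall>T'\<in>\<A>. T \<noteq> T' \<longrightarrow> \<Union>(set T) \<inter> \<Union>(set T') = {})"

end

theory Submission
  imports Defs
begin


lemma card_supersets:
  assumes "finite V" "A \<subseteq> V" "card A \<le> j"
  shows "card {S. S \<subseteq> V \<and> card S = j \<and> A \<subseteq> S} = (card V - card A) choose (j - card A)"
proof -
  have fA: "finite A" using assms finite_subset by blast
  have img2: "(\<lambda>T. T \<union> A) ` {T. T \<subseteq> V - A \<and> card T = j - card A} \<subseteq> {S. S \<subseteq> V \<and> card S = j \<and> A \<subseteq> S}"
  proof
    fix S assume "S \<in> (\<lambda>T. T \<union> A) ` {T. T \<subseteq> V - A \<and> card T = j - card A}"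
    then obtain T where T: "T \<subseteq> V - A" "card T = j - card A" and S: "S = T \<union> A" by auto
    have fT: "finite T" using T assms(1) finite_subset by blast
    have "card (T \<union> A) = card T + card A" using T fT fA by (subst card_Un_disjoint) auto
    then show "S \<in> {S. S \<subseteq> V \<and> card S = j \<and> A \<subseteq> S}" using T S assms by auto
  qed
  have "bij_betw (\<lambda>S. S - A) {S. S \<subseteq> V \<and> card S = j \<and> A \<subseteq> S} {T. T \<subseteq> V - A \<and> card T = j - card A}"
    by (rule bij_betw_byWitness[where f'="\<lambda>T. T \<union> A", OF _ _ _ img2])
       (use fA in \<open>auto simp: card_Diff_subset\<close>)
  then have "card {S. S \<subseteq> V \<and> card S = j \<and> A \<subseteq> S} = card {T. T \<subseteq> V - A \<and> card T = j - card A}"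
    by (rule bij_betw_same_card)
  also have "\<dots> = card (V - A) choose (j - card A)" using assms by (intro n_subsets) auto
  also have "card (V - A) = card V - card A" using assms fA by (simp add: card_Diff_subset)
  finally show ?thesis .
qed

lemma card_seq_ge:
  fixes F :: "'a list \<Rightarrow> 'a set" and b :: real
  assumes fin: "finite B" and sub: "\<And>xs. F xs \<subseteq> B" and b: "b \<ge> 0"
    and big: "\<And>xs. length xs < m \<Longrightarrow> (\<forall>i<length xs. xs ! i \<in> F (take i xs)) \<Longrightarrow> b \<le> real (card (F xs))"
  shows "b ^ m \<le> real (card {xs. length xs = m \<and> (\<forall>i<m. xs ! i \<in> F (take i xs))})"
  using big
proof (induction m)
  case 0
  have "{xs. length xs = 0 \<and> (\<forall>i<0. xs ! i \<in> F (take i xs))} = {[]}" by auto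
  then show ?case by simp
next
  case (Suc m)
  let ?P = "\<lambda>m. {xs. length xs = m \<and> (\<forall>i<m. xs ! i \<in> F (take i xs))}"
  have finP: "finite (?P m)" for m
  proof (rule finite_subset[OF _ finite_lists_length_eq[OF fin, of m]])
    show "?P m \<subseteq> {xs. set xs \<subseteq> B \<and> length xs = m}"
    proof
      fix xs assume xs: "xs \<in> ?P m"
      have "set xs \<subseteq> B"
      proof
        fix x assume "x \<in> set xs"
        then obtain i where "i < length xs" "x = xs ! i" by (metis in_set_conv_nth)
        moreover have "xs ! i \<in> F (take i xs)" using xs \<open>i < length xs\<close> by simp
        ultimately show "x \<in> B" using subsetD[OF sub] by simp
      qed
      then show "xs \<in> {xs. set xs \<subseteq> B \<and> length xs = m}" using xs by simp
    qed
  qed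
  have eq: "?P (Suc m) = (\<lambda>(xs, y). xs @ [y]) ` Sigma (?P m) F"
  proof (rule set_eqI, rule iffI)
    fix zs assume zs: "zs \<in> ?P (Suc m)"
    then have "zs \<noteq> []" by auto
    then obtain xs y where zxy: "zs = xs @ [y]" by (metis rev_exhaust)
    have lx: "length xs = m" using zs zxy by auto
    have "\<forall>i<m. xs ! i \<in> F (take i xs)"
    proof (intro allI impI)
      fix i assume "i < m"
      then have "zs ! i \<in> F (take i zs)" using zs by auto
      then show "xs ! i \<in> F (take i xs)" using \<open>i<m\<close> lx zxy by (simp add: nth_append)
    qed
    moreover have "y \<in> F xs" using zs zxy lx by (auto dest: spec[of _ m])
    ultimately show "zs \<in> (\<lambda>(xs, y). xs @ [y]) ` Sigma (?P m) F" using lx zxy by force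
  next
    fix zs assume "zs \<in> (\<lambda>(xs, y). xs @ [y]) ` Sigma (?P m) F"
    then obtain xs y where zxy: "zs = xs @ [y]" and xs: "xs \<in> ?P m" and y: "y \<in> F xs" by auto
    show "zs \<in> ?P (Suc m)"
    proof (simp, intro conjI allI impI)
      show "length zs = Suc m" using xs zxy by auto
      fix i assume "i < Suc m"
      then show "zs ! i \<in> F (take i zs)"
        using xs y zxy by (cases "i < m") (auto simp: nth_append less_Suc_eq)
    qed
  qed
  have inj: "inj_on (\<lambda>(xs, y). xs @ [y]) (Sigma (?P m) F)" by (auto simp: inj_on_def)
  have "card (?P (Suc m)) = card (Sigma (?P m) F)" unfolding eq by (rule card_image[OF inj])
  also have "\<dots> = (\<Sum>xs\<in>?P m. card (F xs))"
    using finP by (intro card_SigmaI) (auto intro: finite_subset[OF sub fin])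
  finally have c: "real (card (?P (Suc m))) = (\<Sum>xs\<in>?P m. real (card (F xs)))" by simp
  have "(\<Sum>xs\<in>?P m. b) \<le> (\<Sum>xs\<in>?P m. real (card (F xs)))"
    using Suc.prems by (intro sum_mono) auto
  then have "real (card (?P m)) * b \<le> real (card (?P (Suc m)))" using c by simp
  moreover have "b ^ m \<le> real (card (?P m))" using Suc by auto
  ultimately have "b ^ m * b \<le> real (card (?P (Suc m)))"
    by (meson b mult_right_mono order_trans)
  then show ?case by (simp add: mult.commute)
qed

lemma exists_le_avg:
  fixes f :: "'c \<Rightarrow> real"
  assumes "finite C" "C \<noteq> {}" "sum f C \<le> real (card C) * B"
  shows "\<exists>c\<in>C. f c \<le> B"
proof (rule ccontr)
  assume "\<not> ?thesis"
  then have "\<forall>c\<in>C. B < f c" by auto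
  then have "(\<Sum>c\<in>C. B) < sum f C" using assms by (intro sum_strict_mono) auto
  then show False using assms by simp
qed

lemma avg_step:
  fixes X :: "'x set" and C :: "'c set" and h :: "'x \<Rightarrow> nat" and \<gamma> :: real
  assumes fX: "finite X" and fC: "finite C" and ne: "C \<noteq> {}"
    and sub: "\<And>x. x \<in> X \<Longrightarrow> good x \<subseteq> C"
    and dens: "\<And>x. x \<in> X \<Longrightarrow> \<gamma> * real (card C) \<le> real (card (good x))"
  shows "\<exists>c\<in>C. (\<Sum>x\<in>X. (1/2::real) ^ (h x + (if c \<in> good x then 1 else 0)))
                 \<le> (1 - \<gamma>/2) * (\<Sum>x\<in>X. (1/2::real) ^ h x)"
proof (rule exists_le_avg[OF fC ne])
  have inner: "(\<Sum>c\<in>C. (1/2::real) ^ (h x + (if c \<in> good x then 1 else 0)))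
      = (1/2) ^ h x * (real (card C) - real (card (good x)) / 2)" if x: "x \<in> X" for x
  proof -
    have fg: "finite (good x)" using sub[OF x] fC finite_subset by blast
    have "(\<Sum>c\<in>C. (1/2::real) ^ (h x + (if c \<in> good x then 1 else 0)))
        = (\<Sum>c\<in>C. (1/2) ^ h x * (1 - (if c \<in> good x then 1/2 else 0)))"
      by (intro sum.cong) (auto simp: power_add)
    also have "\<dots> = (1/2) ^ h x * (real (card C) - (\<Sum>c\<in>C. (if c \<in> good x then 1/2 else 0)))"
      by (simp add: sum_distrib_left[symmetric] sum_subtractf)
    also have "(\<Sum>c\<in>C. (if c \<in> good x then (1/2::real) else 0)) = (\<Sum>c\<in>good x. 1/2)"
      using sub[OF x] fC by (simp add: sum.If_cases Int_absorb1)
    also have "\<dots> = real (card (good x)) / 2" by simp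
    finally show ?thesis .
  qed
  have "(\<Sum>c\<in>C. \<Sum>x\<in>X. (1/2::real) ^ (h x + (if c \<in> good x then 1 else 0)))
      = (\<Sum>x\<in>X. \<Sum>c\<in>C. (1/2::real) ^ (h x + (if c \<in> good x then 1 else 0)))"
    by (rule sum.swap)
  also have "\<dots> = (\<Sum>x\<in>X. (1/2) ^ h x * (real (card C) - real (card (good x)) / 2))"
    using inner by (intro sum.cong) auto
  also have "\<dots> \<le> (\<Sum>x\<in>X. (1/2) ^ h x * (real (card C) * (1 - \<gamma>/2)))"
    using dens by (intro sum_mono mult_left_mono) (auto simp: algebra_simps)
  also have "\<dots> = real (card C) * ((1 - \<gamma>/2) * (\<Sum>x\<in>X. (1/2::real) ^ h x))"
    by (simp add: sum_distrib_left sum_distrib_right algebra_simps)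
  finally show "(\<Sum>c\<in>C. \<Sum>x\<in>X. (1/2::real) ^ (h x + (if c \<in> good x then 1 else 0)))
      \<le> real (card C) * ((1 - \<gamma>/2) * (\<Sum>x\<in>X. (1/2::real) ^ h x))" .
qed



lemma card_filter_sum: "finite A \<Longrightarrow> card {x\<in>A. P x} = (\<Sum>x\<in>A. if P x then 1 else 0)"
  by (simp add: sum.If_cases Int_def)

locale setting =
  fixes k d :: nat and \<epsilon> :: real and n :: nat and E :: "nat set set"
  assumes d1: "1 \<le> d" and dk: "d < k" and eps: "\<epsilon> > 0"
    and kg: "kgraph k {..<n} E"
    and md: "real (min_deg {..<n} E d) \<ge> (1/2 + \<epsilon>) * real ((n - d) choose (k - d))"
    and nk: "k < n"
begin

lemma E_sub: "e \<in> E \<Longrightarrow> e \<subseteq> {..<n}" and E_card: "e \<in> E \<Longrightarrow> card e = k"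
  using kg unfolding kgraph_def by auto

lemma finE: "finite E"
  by (rule finite_subset[of _ "Pow {..<n}"]) (use E_sub in auto)

lemma deg_lb:
  assumes w: "w < n"
  shows "(1/2 + \<epsilon>) * real ((n-1) choose (k-1)) \<le> real (card {e\<in>E. w \<in> e})"
proof -
  let ?D = "{S. S \<subseteq> {..<n} \<and> card S = d \<and> {w} \<subseteq> S}"
  have c1: "card ?D = (n-1) choose (d-1)"
    using card_supersets[of "{..<n}" "{w}" d] w d1 by simp
  have finD: "finite ?D" by (rule finite_subset[of _ "Pow {..<n}"]) auto
  have c2: "min_deg {..<n} E d \<le> card {e\<in>E. S \<subseteq> e}" if S: "S \<in> ?D" for S
  proof -
    have eq: "{card {e \<in> E. S \<subseteq> e} |S. S \<subseteq> {..<n} \<and> card S = d}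
        = (\<lambda>S. card {e \<in> E. S \<subseteq> e}) ` {S. S \<subseteq> {..<n} \<and> card S = d}" by auto
    have "finite {S. S \<subseteq> {..<n} \<and> card S = d}"
      by (rule finite_subset[of _ "Pow {..<n}"]) auto
    then show ?thesis unfolding min_deg_def eq using S by (intro Min_le) auto
  qed
  have c3: "(\<Sum>S\<in>?D. card {e\<in>E. S \<subseteq> e}) = card {e\<in>E. w \<in> e} * ((k-1) choose (d-1))"
  proof -
    have "(\<Sum>S\<in>?D. card {e\<in>E. S \<subseteq> e}) = (\<Sum>S\<in>?D. \<Sum>e\<in>E. if S \<subseteq> e then 1 else 0)"
      using finE by (simp add: card_filter_sum)
    also have "\<dots> = (\<Sum>e\<in>E. \<Sum>S\<in>?D. if S \<subseteq> e then 1 else 0)" by (rule sum.swap)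
    also have "\<dots> = (\<Sum>e\<in>E. card {S\<in>?D. S \<subseteq> e})"
      by (intro sum.cong refl) (rule card_filter_sum[OF finD, symmetric])
    also have "\<dots> = (\<Sum>e\<in>E. if w \<in> e then (k-1) choose (d-1) else 0)"
    proof (rule sum.cong[OF refl])
      fix e assume e: "e \<in> E"
      show "card {S\<in>?D. S \<subseteq> e} = (if w \<in> e then (k-1) choose (d-1) else 0)"
      proof (cases "w \<in> e")
        case True
        have "{S\<in>?D. S \<subseteq> e} = {S. S \<subseteq> e \<and> card S = d \<and> {w} \<subseteq> S}" using E_sub[OF e] by auto
        moreover have "finite e" using E_sub[OF e] finite_subset by blast
        ultimately show ?thesis using True card_supersets[of e "{w}" d] E_card[OF e] d1 by simp
      next
        case False
        then have "{S\<in>?D. S \<subseteq> e} = {}" by auto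
        then show ?thesis using False by simp
      qed
    qed
    also have "\<dots> = card {e\<in>E. w \<in> e} * ((k-1) choose (d-1))"
      using finE by (simp add: card_filter_sum sum_distrib_right[symmetric] sum.If_cases)
    finally show ?thesis .
  qed
  have "card ?D * min_deg {..<n} E d \<le> (\<Sum>S\<in>?D. card {e\<in>E. S \<subseteq> e})"
    using c2 sum_mono[of ?D "\<lambda>_. min_deg {..<n} E d"] by simp
  then have A: "real ((n-1) choose (d-1)) * real (min_deg {..<n} E d) \<le> real (card {e\<in>E. w \<in> e}) * real ((k-1) choose (d-1))"
    using c1 c3 by (metis of_nat_le_iff of_nat_mult)
  have cm: "((n-1) choose (k-1)) * ((k-1) choose (d-1)) = ((n-1) choose (d-1)) * ((n-d) choose (k-d))"
  proof -
    have "((n-1) choose (k-1)) * ((k-1) choose (d-1)) = ((n-1) choose (d-1)) * ((n-1-(d-1)) choose (k-1-(d-1)))"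
      using dk nk by (intro choose_mult) auto
    moreover have "n-1-(d-1) = n-d" "k-1-(d-1) = k-d" using d1 by auto
    ultimately show ?thesis by simp
  qed
  have pos: "real ((k-1) choose (d-1)) > 0" using dk by simp
  have "(1/2 + \<epsilon>) * real ((n-1) choose (k-1)) * real ((k-1) choose (d-1))
      = real ((n-1) choose (d-1)) * ((1/2 + \<epsilon>) * real ((n - d) choose (k - d)))"
    using arg_cong[OF cm, of real] by (simp add: algebra_simps)
  also have "\<dots> \<le> real ((n-1) choose (d-1)) * real (min_deg {..<n} E d)"
    using md by (intro mult_left_mono) auto
  also have "\<dots> \<le> real (card {e\<in>E. w \<in> e}) * real ((k-1) choose (d-1))" by (rule A)
  finally show ?thesis using pos by simp
qed

lemma k2: "2 \<le> k" using d1 dk by simp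

lemma codeg:
  assumes "w \<noteq> y"
  shows "card {e\<in>E. w \<in> e \<and> y \<in> e} \<le> (n-1)^(k-2)"
proof (cases "w < n \<and> y < n")
  case True
  have "card {e\<in>E. w \<in> e \<and> y \<in> e} \<le> card {S. S \<subseteq> {..<n} \<and> card S = k \<and> {w,y} \<subseteq> S}"
    by (rule card_mono) (use E_sub E_card in \<open>auto intro: finite_subset[of _ "Pow {..<n}"]\<close>)
  also have "\<dots> = (n - 2) choose (k - 2)"
    using card_supersets[of "{..<n}" "{w,y}" k] True assms k2 by (simp add: numeral_2_eq_2)
  also have "\<dots> \<le> (n-2)^(k-2)" using nk by (intro binomial_le_pow) simp
  also have "\<dots> \<le> (n-1)^(k-2)" by (intro power_mono) auto
  finally show ?thesis .
next
  case False
  then have "{e\<in>E. w \<in> e \<and> y \<in> e} = {}" using E_sub by auto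
  then show ?thesis by (simp only: card.empty zero_le)
qed

lemma contain:
  "card {S. S \<subseteq> {..<n} \<and> card S = k-1 \<and> y \<in> S} \<le> (n-1)^(k-2)"
proof (cases "y < n")
  case True
  have "card {S. S \<subseteq> {..<n} \<and> card S = k-1 \<and> y \<in> S} = card {S. S \<subseteq> {..<n} \<and> card S = k-1 \<and> {y} \<subseteq> S}"
    by simp
  also have "\<dots> = (n - 1) choose (k - 2)"
    using card_supersets[of "{..<n}" "{y}" "k-1"] True k2 by (simp add: numeral_2_eq_2)
  also have "\<dots> \<le> (n-1)^(k-2)" using nk by (intro binomial_le_pow) simp
  finally show ?thesis .
next
  case False
  then have "{S. S \<subseteq> {..<n} \<and> card S = k-1 \<and> y \<in> S} = {}" by auto
  then show ?thesis by (simp only: card.empty zero_le)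
qed

lemma BndD: "real ((n-1)^(k-2)) * real (n-1) \<le> real (k-1)^(k-1) * real ((n-1) choose (k-1))"
proof -
  have "(real (n-1) / real (k-1)) ^ (k-1) \<le> real ((n-1) choose (k-1))"
    using nk by (intro binomial_ge_n_over_k_pow_k) simp
  then have "real (k-1)^(k-1) * (real (n-1) / real (k-1)) ^ (k-1) \<le> real (k-1)^(k-1) * real ((n-1) choose (k-1))"
    by (intro mult_left_mono) auto
  moreover have "real (k-1)^(k-1) * (real (n-1) / real (k-1)) ^ (k-1) = real (n-1) ^ (k-1)"
    using k2 by (simp add: power_divide)
  moreover have "real (n-1) ^ (k-1) = real ((n-1)^(k-2)) * real (n-1)"
  proof -
    have "k - 1 = Suc (k-2)" using k2 by simp
    then show ?thesis by (simp add: mult.commute)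
  qed
  ultimately show ?thesis by simp
qed

lemma hit:
  assumes "finite Y"
  shows "card {S. S \<subseteq> {..<n} \<and> card S = k-1 \<and> S \<inter> Y \<noteq> {}} \<le> card Y * (n-1)^(k-2)"
proof -
  have "{S. S \<subseteq> {..<n} \<and> card S = k-1 \<and> S \<inter> Y \<noteq> {}} \<subseteq> (\<Union>y\<in>Y. {S. S \<subseteq> {..<n} \<and> card S = k-1 \<and> y \<in> S})"
    by auto
  then have "card {S. S \<subseteq> {..<n} \<and> card S = k-1 \<and> S \<inter> Y \<noteq> {}} \<le> card (\<Union>y\<in>Y. {S. S \<subseteq> {..<n} \<and> card S = k-1 \<and> y \<in> S})"
    by (intro card_mono) (auto intro!: finite_UN_I assms intro: finite_subset[of _ "Pow {..<n}"])
  also have "\<dots> \<le> (\<Sum>y\<in>Y. card {S. S \<subseteq> {..<n} \<and> card S = k-1 \<and> y \<in> S})"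
    by (rule card_UN_le[OF assms])
  also have "\<dots> \<le> (\<Sum>y\<in>Y. (n-1)^(k-2))" by (intro sum_mono contain)
  finally show ?thesis by simp
qed

definition Gs :: "nat \<Rightarrow> nat \<Rightarrow> nat set set" where
  "Gs w v = {S. S \<subseteq> {..<n} - {w,v} \<and> card S = k-1 \<and> insert w S \<in> E \<and> insert v S \<in> E}"

lemma L_lb:
  assumes w: "w < n" and wv: "w \<noteq> v"
  shows "(1/2 + \<epsilon>) * real ((n-1) choose (k-1)) - real ((n-1)^(k-2))
     \<le> real (card {S. S \<subseteq> {..<n} - {w,v} \<and> card S = k-1 \<and> insert w S \<in> E})"
proof -
  let ?A = "{e\<in>E. w \<in> e}" and ?B = "{e\<in>E. w \<in> e \<and> v \<in> e}"
  have "card {e\<in>E. w \<in> e \<and> v \<notin> e} = card (?A - ?B)"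
    by (intro arg_cong[where f=card]) auto
  also have "\<dots> = card ?A - card ?B" by (rule card_Diff_subset) (use finE in auto)
  finally have c: "real (card {e\<in>E. w \<in> e \<and> v \<notin> e}) \<ge> real (card ?A) - real (card ?B)" by linarith
  have "card {e\<in>E. w \<in> e \<and> v \<notin> e} \<le> card {S. S \<subseteq> {..<n} - {w,v} \<and> card S = k-1 \<and> insert w S \<in> E}"
  proof (rule card_inj_on_le[where f="\<lambda>e. e - {w}"])
    show "inj_on (\<lambda>e. e - {w}) {e\<in>E. w \<in> e \<and> v \<notin> e}"
      by (rule inj_onI) (metis (no_types, lifting) insert_Diff mem_Collect_eq)
    show "(\<lambda>e. e - {w}) ` {e\<in>E. w \<in> e \<and> v \<notin> e} \<subseteq> {S. S \<subseteq> {..<n} - {w,v} \<and> card S = k-1 \<and> insert w S \<in> E}"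
    proof
      fix S assume "S \<in> (\<lambda>e. e - {w}) ` {e\<in>E. w \<in> e \<and> v \<notin> e}"
      then obtain e where e: "e \<in> E" "w \<in> e" "v \<notin> e" and S: "S = e - {w}" by auto
      have "finite e" using E_sub[OF e(1)] finite_subset by blast
      then show "S \<in> {S. S \<subseteq> {..<n} - {w,v} \<and> card S = k-1 \<and> insert w S \<in> E}"
        using E_sub[OF e(1)] E_card[OF e(1)] e S by (auto simp: insert_absorb)
    qed
    show "finite {S. S \<subseteq> {..<n} - {w, v} \<and> card S = k - 1 \<and> insert w S \<in> E}"
      by (rule finite_subset[of _ "Pow {..<n}"]) auto
  qed
  then show ?thesis using c deg_lb[OF w] codeg[OF wv] by linarith
qed

lemma G_lb:
  assumes w: "w < n" and v: "v < n" and wv: "w \<noteq> v"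
  shows "2 * \<epsilon> * real ((n-1) choose (k-1)) - 2 * real ((n-1)^(k-2)) \<le> real (card (Gs w v))"
proof -
  let ?L = "\<lambda>u. {S. S \<subseteq> {..<n} - {w,v} \<and> card S = k-1 \<and> insert u S \<in> E}"
  have Lw: "(1/2 + \<epsilon>) * real ((n-1) choose (k-1)) - real ((n-1)^(k-2)) \<le> real (card (?L w))"
    by (rule L_lb[OF w wv])
  have Lv: "(1/2 + \<epsilon>) * real ((n-1) choose (k-1)) - real ((n-1)^(k-2)) \<le> real (card (?L v))"
    using L_lb[OF v wv[symmetric]] by (simp add: insert_commute)
  have fin: "finite (?L u)" for u by (rule finite_subset[of _ "Pow {..<n}"]) auto
  have un: "card (?L w \<union> ?L v) \<le> (n-1) choose (k-1)"
  proof -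
    have "card (?L w \<union> ?L v) \<le> card {S. S \<subseteq> {..<n} - {w} \<and> card S = k-1}"
      by (rule card_mono) (auto intro: finite_subset[of _ "Pow {..<n}"])
    also have "\<dots> = card ({..<n} - {w}) choose (k-1)" by (rule n_subsets) simp
    also have "card ({..<n} - {w}) = n - 1" using w by simp
    finally show ?thesis .
  qed
  have Geq: "?L w \<inter> ?L v = Gs w v" unfolding Gs_def by auto
  have "card (?L w) + card (?L v) = card (?L w \<union> ?L v) + card (Gs w v)"
    using card_Un_Int[OF fin fin] Geq by simp
  then have "card (?L w) + card (?L v) \<le> ((n-1) choose (k-1)) + card (Gs w v)"
    using un by linarith
  then have "real (card (?L w) + card (?L v)) \<le> real (((n-1) choose (k-1)) + card (Gs w v))"
    by (rule of_nat_mono)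
  then have "real (card (?L w)) + real (card (?L v)) \<le> real ((n-1) choose (k-1)) + real (card (Gs w v))"
    by simp
  moreover have "(1/2 + \<epsilon>) * real ((n-1) choose (k-1)) = real ((n-1) choose (k-1))/2 + \<epsilon> * real ((n-1) choose (k-1))"
    by (simp add: algebra_simps)
  ultimately show ?thesis using Lw Lv by linarith
qed

end


context setting begin

definition Avs :: "nat \<Rightarrow> nat set \<Rightarrow> nat list set" where
  "Avs w Y0 = {vs. length vs = k-1 \<and> distinct vs \<and> set vs \<subseteq> {..<n} \<and> w \<notin> set vs \<and>
      insert w (set vs) \<in> E \<and> set vs \<inter> Y0 = {}}"

lemma Avs_fin: "finite (Avs w Y0)"
  by (rule finite_subset[OF _ finite_lists_length_eq[of "{..<n}" "k-1"]]) (auto simp: Avs_def)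

lemma Avs_lb:
  assumes w: "w < n" and fY: "finite Y0"
  shows "(1/2 + \<epsilon>) * real ((n-1) choose (k-1)) - real (card Y0) * real ((n-1)^(k-2)) \<le> real (card (Avs w Y0))"
proof -
  let ?A = "{e\<in>E. w \<in> e}" and ?Ew = "{e\<in>E. w \<in> e \<and> (e - {w}) \<inter> Y0 = {}}"
  have sub: "?A - ?Ew \<subseteq> (\<Union>y\<in>Y0 - {w}. {e\<in>E. w \<in> e \<and> y \<in> e})" by auto
  have "card (?A - ?Ew) \<le> card (\<Union>y\<in>Y0 - {w}. {e\<in>E. w \<in> e \<and> y \<in> e})"
    by (rule card_mono[OF _ sub]) (use fY finE in auto)
  also have "\<dots> \<le> (\<Sum>y\<in>Y0 - {w}. card {e\<in>E. w \<in> e \<and> y \<in> e})" by (rule card_UN_le) (use fY in auto)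
  also have "\<dots> \<le> (\<Sum>y\<in>Y0 - {w}. (n-1)^(k-2))" by (intro sum_mono codeg) auto
  also have "\<dots> = card (Y0 - {w}) * (n-1)^(k-2)" by simp
  also have "\<dots> \<le> card Y0 * (n-1)^(k-2)" by (intro mult_right_mono card_mono) (use fY in auto)
  finally have c1: "card (?A - ?Ew) \<le> card Y0 * (n-1)^(k-2)" .
  have "card (?A - ?Ew) = card ?A - card ?Ew" by (rule card_Diff_subset) (use finE in auto)
  moreover have "card ?Ew \<le> card ?A" by (rule card_mono) (use finE in auto)
  ultimately have "card ?A \<le> card ?Ew + card Y0 * (n-1)^(k-2)" using c1 by linarith
  then have "real (card ?A) \<le> real (card ?Ew + card Y0 * (n-1)^(k-2))" by (rule of_nat_mono)
  then have c2: "real (card ?A) - real (card Y0) * real ((n-1)^(k-2)) \<le> real (card ?Ew)"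
    by simp
  have "card ?Ew \<le> card (Avs w Y0)"
  proof (rule card_inj_on_le[where f="\<lambda>e. sorted_list_of_set (e - {w})"])
    show "inj_on (\<lambda>e. sorted_list_of_set (e - {w})) ?Ew"
    proof (rule inj_onI)
      fix e e' assume e: "e \<in> ?Ew" and e': "e' \<in> ?Ew" and eq: "sorted_list_of_set (e - {w}) = sorted_list_of_set (e' - {w})"
      have "e \<in> E" "e' \<in> E" using e e' by simp_all
      then have "finite e" "finite e'" using finite_subset[OF E_sub] by blast+
      then have s1: "set (sorted_list_of_set (e - {w})) = e - {w}" and s2: "set (sorted_list_of_set (e' - {w})) = e' - {w}" by simp_all
      have "e - {w} = set (sorted_list_of_set (e - {w}))" using s1 by (rule sym)
      also have "\<dots> = set (sorted_list_of_set (e' - {w}))" using eq by (rule arg_cong)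
      also have "\<dots> = e' - {w}" by (rule s2)
      finally have "e - {w} = e' - {w}" .
      then have "insert w (e - {w}) = insert w (e' - {w})" by simp
      then show "e = e'" using e e' by (simp add: insert_absorb)
    qed
    show "(\<lambda>e. sorted_list_of_set (e - {w})) ` ?Ew \<subseteq> Avs w Y0"
    proof
      fix vs assume "vs \<in> (\<lambda>e. sorted_list_of_set (e - {w})) ` ?Ew"
      then obtain e where e: "e \<in> E" "w \<in> e" "(e - {w}) \<inter> Y0 = {}" and vs: "vs = sorted_list_of_set (e - {w})" by auto
      have fe: "finite e" using finite_subset[OF E_sub[OF e(1)]] by simp
      then have sv: "set vs = e - {w}" using vs by simp
      have "length vs = k - 1" using vs fe E_card[OF e(1)] e(2) by simp
      moreover have "distinct vs" using vs by simp
      moreover have "set vs \<subseteq> {..<n}" using sv E_sub[OF e(1)] by auto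
      moreover have "w \<notin> set vs" using sv by simp
      moreover have "insert w (set vs) \<in> E" using sv e(1,2) by (simp add: insert_absorb)
      moreover have "set vs \<inter> Y0 = {}" using sv e(3) by simp
      ultimately show "vs \<in> Avs w Y0" unfolding Avs_def by blast
    qed
  qed (rule Avs_fin)
  then show ?thesis using c2 deg_lb[OF w] by linarith
qed

end


context setting begin

definition Tof :: "nat list \<times> nat set list \<Rightarrow> nat set list" where
  "Tof c = map (\<lambda>i. insert (fst c ! i) (snd c ! i)) [0..<k-1]"

definition Fsel :: "nat set \<Rightarrow> nat list \<Rightarrow> nat list \<Rightarrow> nat set list \<Rightarrow> nat set set" where
  "Fsel U ws vs pre = {S \<in> Gs (ws ! length pre) (vs ! length pre).
      S \<inter> (U \<union> set ws \<union> set vs \<union> \<Union>(set pre)) = {}}"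

definition Seqs :: "nat set \<Rightarrow> nat list \<Rightarrow> nat list \<Rightarrow> nat set list set" where
  "Seqs U ws vs = {Ss. length Ss = k-1 \<and> (\<forall>i<k-1. Ss ! i \<in> Fsel U ws vs (take i Ss))}"

lemma disj_pair:
  assumes vs: "distinct vs" "length vs = k-1" and Ss: "Ss \<in> Seqs U ws vs"
    and ij: "i < j" "j < k-1"
  shows "insert (vs ! i) (Ss ! i) \<inter> insert (vs ! j) (Ss ! j) = {}"
proof -
  have lS: "length Ss = k-1" using Ss unfolding Seqs_def by simp
  have Fi: "Ss ! i \<in> Fsel U ws vs (take i Ss)" and Fj: "Ss ! j \<in> Fsel U ws vs (take j Ss)"
    using Ss ij unfolding Seqs_def by auto
  have Yi: "Ss ! i \<inter> set vs = {}" using Fi unfolding Fsel_def by auto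
  have Yj: "Ss ! j \<inter> (set vs \<union> \<Union>(set (take j Ss))) = {}" using Fj unfolding Fsel_def by auto
  have mem: "Ss ! i \<in> set (take j Ss)" using ij lS by (auto simp: in_set_conv_nth intro: exI[of _ i])
  have "vs ! i \<noteq> vs ! j" using vs ij by (simp add: nth_eq_iff_index_eq)
  moreover have "vs ! i \<notin> Ss ! j" "vs ! j \<notin> Ss ! i" using Yi Yj ij vs(2) by auto
  moreover have "Ss ! i \<inter> Ss ! j = {}" using Yj mem by blast
  ultimately show ?thesis by blast
qed

lemma Seqs_Gs:
  assumes "Ss \<in> Seqs U ws vs" "i < k-1"
  shows "Ss ! i \<in> Gs (ws ! i) (vs ! i)" "Ss ! i \<inter> U = {}"
proof -
  have "Ss ! i \<in> Fsel U ws vs (take i Ss)" "length Ss = k-1" using assms unfolding Seqs_def by auto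
  then show "Ss ! i \<in> Gs (ws ! i) (vs ! i)" "Ss ! i \<inter> U = {}" using assms(2) unfolding Fsel_def by auto
qed

definition Full :: "(nat list \<times> nat set list) set" where
  "Full = {vs. set vs \<subseteq> {..<n} \<and> length vs = k-1} \<times>
          {Ss. set Ss \<subseteq> {S. S \<subseteq> {..<n} \<and> card S = k-1} \<and> length Ss = k-1}"

definition Cset :: "nat set \<Rightarrow> (nat list \<times> nat set list) set" where
  "Cset U = {c \<in> Full. absorbing_tuple_of k {..<n} E (Tof c) \<and> \<Union>(set (Tof c)) \<inter> U = {}}"

definition good :: "nat set \<Rightarrow> nat \<Rightarrow> nat list \<Rightarrow> (nat list \<times> nat set list) set" where
  "good U w ws = {c \<in> Cset U. Tof c \<in> absorbing_set k E w ws}"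

lemma mem_good:
  assumes ot: "ordered_tuple k {..<n} w ws" and vs: "vs \<in> Avs w (U \<union> set ws)" and Ss: "Ss \<in> Seqs U ws vs"
  shows "(vs, Ss) \<in> good U w ws"
proof -
  let ?T = "Tof (vs, Ss)"
  have lT: "length ?T = k-1" unfolding Tof_def by simp
  have Tn: "?T ! i = insert (vs ! i) (Ss ! i)" if "i < k-1" for i
    using that unfolding Tof_def by simp
  have lvs: "length vs = k-1" and dvs: "distinct vs" and svs: "set vs \<subseteq> {..<n}" and wvs: "insert w (set vs) \<in> E"
    and dis: "set vs \<inter> (U \<union> set ws) = {}"
    using vs unfolding Avs_def by auto
  have lws: "length ws = k-1" using ot unfolding ordered_tuple_def by simp
  have lSs: "length Ss = k-1" using Ss unfolding Seqs_def by simp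
  have G: "Ss ! i \<in> Gs (ws ! i) (vs ! i)" "Ss ! i \<inter> U = {}" if "i < k-1" for i
    using Seqs_Gs[OF Ss that] by auto
  have ne: "ws ! i \<noteq> vs ! i" if "i < k-1" for i
  proof -
    have "ws ! i \<in> set ws" "vs ! i \<in> set vs" using that lws lvs by simp_all
    moreover have "set vs \<inter> set ws = {}" using dis by (simp add: Int_Un_distrib)
    ultimately show ?thesis by (metis disjoint_iff)
  qed
  have Gi: "Ss ! i \<subseteq> {..<n} - {ws ! i, vs ! i}" "card (Ss ! i) = k-1"
      "insert (ws ! i) (Ss ! i) \<in> E" "insert (vs ! i) (Ss ! i) \<in> E" if "i < k-1" for i
    using G(1)[OF that] unfolding Gs_def mem_Collect_eq by simp_all
  have abs: "absorbing k E w ws ?T"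
    unfolding absorbing_def
  proof (intro conjI)
    show "length ?T = k-1" by (rule lT)
    show "set ?T \<subseteq> E"
    proof
      fix x assume "x \<in> set ?T"
      then obtain i where i: "i < k-1" "x = ?T ! i" using lT by (metis in_set_conv_nth)
      then show "x \<in> E" using Tn Gi(4) by simp
    qed
    show "\<exists>vs'. length vs' = k - 1 \<and> (\<forall>i<k - 1. \<exists>e. diamond k E (ws ! i) (vs' ! i) e (?T ! i)) \<and>
        (\<forall>i<k - 1. \<forall>j<k - 1. i \<noteq> j \<longrightarrow> ?T ! i \<inter> ?T ! j = {}) \<and> insert w (set vs') \<in> E"
    proof (intro exI[of _ vs] conjI allI impI)
      show "length vs = k-1" by (rule lvs)
      show "insert w (set vs) \<in> E" by (rule wvs)
      fix i assume i: "i < k-1"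
      show "\<exists>e. diamond k E (ws ! i) (vs ! i) e (?T ! i)"
      proof (intro exI[of _ "insert (ws ! i) (Ss ! i)"])
        have a: "ws ! i \<notin> Ss ! i" "vs ! i \<notin> Ss ! i" using Gi(1)[OF i] by auto
        have "insert (ws ! i) (Ss ! i) \<inter> insert (vs ! i) (Ss ! i) = Ss ! i" using a ne[OF i] by auto
        then show "diamond k E (ws ! i) (vs ! i) (insert (ws ! i) (Ss ! i)) (?T ! i)"
          unfolding diamond_def Tn[OF i] using Gi[OF i] a ne[OF i] by auto
      qed
    next
      fix i j assume i: "i < k-1" and j: "j < k-1" and ij: "i \<noteq> j"
      show "?T ! i \<inter> ?T ! j = {}"
      proof (cases "i < j")
        case True
        then show ?thesis using disj_pair[OF dvs lvs Ss True j] Tn i j by simp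
      next
        case False
        then have "j < i" using ij by simp
        then have "insert (vs ! j) (Ss ! j) \<inter> insert (vs ! i) (Ss ! i) = {}"
          by (rule disj_pair[OF dvs lvs Ss _ i])
        then have "insert (vs ! i) (Ss ! i) \<inter> insert (vs ! j) (Ss ! j) = {}" by (simp only: Int_commute)
        then show ?thesis using Tn[OF i] Tn[OF j] by simp
      qed
    qed
  qed
  have full: "(vs, Ss) \<in> Full"
  proof -
    have "set Ss \<subseteq> {S. S \<subseteq> {..<n} \<and> card S = k-1}"
    proof
      fix S assume "S \<in> set Ss"
      then obtain i where i: "i < k-1" "S = Ss ! i" using lSs by (metis in_set_conv_nth)
      then show "S \<in> {S. S \<subseteq> {..<n} \<and> card S = k-1}" using Gi(1,2)[OF i(1)] by auto
    qed
    then show ?thesis unfolding Full_def using svs lvs lSs by simp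
  qed
  have U: "\<Union>(set ?T) \<inter> U = {}"
  proof -
    have "x \<inter> U = {}" if "x \<in> set ?T" for x
    proof -
      obtain i where i: "i < k-1" "x = ?T ! i" using \<open>x \<in> set ?T\<close> lT by (metis in_set_conv_nth)
      have "vs ! i \<in> set vs" using i lvs by simp
      then have "vs ! i \<notin> U" using dis by (metis Int_iff UnCI empty_iff)
      then show ?thesis using i Tn G(2)[OF i(1)] by auto
    qed
    then show ?thesis by blast
  qed
  have "absorbing_tuple_of k {..<n} E ?T" unfolding absorbing_tuple_of_def using ot abs by blast
  then show ?thesis unfolding good_def Cset_def absorbing_set_def using full U abs by simp
qed

end


context setting begin

lemma Fsel_sub: "Fsel U ws vs pre \<subseteq> Gs (ws ! length pre) (vs ! length pre)"
  unfolding Fsel_def by auto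

lemma Gs_sub: "Gs a b \<subseteq> {S. S \<subseteq> {..<n} \<and> card S = k-1}"
  unfolding Gs_def by auto

lemma Fsel_lb:
  assumes ot: "ordered_tuple k {..<n} w ws" and vs: "vs \<in> Avs w (U \<union> set ws)" and fU: "finite U"
    and lp: "length pre < k-1" and valid: "\<forall>i<length pre. pre ! i \<in> Fsel U ws vs (take i pre)"
  shows "2 * \<epsilon> * real ((n-1) choose (k-1)) - real (2 + card U + 2*(k-1) + (k-1)*(k-1)) * real ((n-1)^(k-2))
     \<le> real (card (Fsel U ws vs pre))"
proof -
  let ?i = "length pre"
  let ?Y = "U \<union> set ws \<union> set vs \<union> \<Union>(set pre)"
  have lws: "length ws = k-1" and sws: "set ws \<subseteq> {..<n}" using ot unfolding ordered_tuple_def by auto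
  have lvs: "length vs = k-1" and svs: "set vs \<subseteq> {..<n}" and dis: "set vs \<inter> (U \<union> set ws) = {}"
    using vs unfolding Avs_def by auto
  have cS: "card S = k-1" if "S \<in> set pre" for S
  proof -
    obtain j where j: "j < length pre" "S = pre ! j" using \<open>S \<in> set pre\<close> by (metis in_set_conv_nth)
    have "pre ! j \<in> Gs (ws ! length (take j pre)) (vs ! length (take j pre))"
      using valid j Fsel_sub by blast
    then show ?thesis using j Gs_sub by auto
  qed
  have finS: "finite S" if "S \<in> set pre" for S
  proof (rule card_ge_0_finite)
    show "card S > 0" using cS[OF that] k2 by simp
  qed
  have "card (\<Union>(set pre)) \<le> sum card (set pre)" by (rule card_Union_le_sum_card)
  also have "\<dots> = (\<Sum>S\<in>set pre. k-1)" using cS by (intro sum.cong) auto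
  also have "\<dots> = card (set pre) * (k-1)" by simp
  also have "\<dots> \<le> (k-1) * (k-1)" using card_length[of pre] lp by (intro mult_right_mono) auto
  finally have cU: "card (\<Union>(set pre)) \<le> (k-1) * (k-1)" .
  have fY: "finite ?Y" using fU finS by auto
  have "card ?Y \<le> card (U \<union> set ws \<union> set vs) + card (\<Union>(set pre))" by (rule card_Un_le)
  also have "card (U \<union> set ws \<union> set vs) \<le> card (U \<union> set ws) + card (set vs)" by (rule card_Un_le)
  also have "card (U \<union> set ws) \<le> card U + card (set ws)" by (rule card_Un_le)
  finally have "card ?Y \<le> card U + card (set ws) + card (set vs) + card (\<Union>(set pre))" by simp
  also have "\<dots> \<le> card U + (k-1) + (k-1) + (k-1)*(k-1)"
    using card_length[of ws] card_length[of vs] lws lvs cU by linarith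
  finally have cY: "card ?Y \<le> card U + 2*(k-1) + (k-1)*(k-1)" by simp
  have wi2: "ws ! ?i \<in> set ws" using lp lws by simp
  have wi: "ws ! ?i < n" "ws ! ?i \<in> set ws" using wi2 sws by auto
  have vi2: "vs ! ?i \<in> set vs" using lp lvs by simp
  have vi: "vs ! ?i < n" "vs ! ?i \<in> set vs" using vi2 svs by auto
  have "set vs \<inter> set ws = {}" using dis by (simp add: Int_Un_distrib)
  then have ne: "ws ! ?i \<noteq> vs ! ?i" using wi(2) vi(2) by (metis disjoint_iff)
  let ?H = "{S. S \<subseteq> {..<n} \<and> card S = k-1 \<and> S \<inter> ?Y \<noteq> {}}"
  have eqF: "Fsel U ws vs pre = Gs (ws ! ?i) (vs ! ?i) - ?H"
  proof (rule set_eqI)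
    fix S
    have "S \<in> Gs (ws ! ?i) (vs ! ?i) \<Longrightarrow> S \<subseteq> {..<n} \<and> card S = k-1" using Gs_sub by blast
    then show "S \<in> Fsel U ws vs pre \<longleftrightarrow> S \<in> Gs (ws ! ?i) (vs ! ?i) - ?H"
      unfolding Fsel_def by auto
  qed
  have finH: "finite ?H" by (rule finite_subset[of _ "Pow {..<n}"]) auto
  have "card (Gs (ws ! ?i) (vs ! ?i)) - card ?H \<le> card (Fsel U ws vs pre)"
    unfolding eqF by (rule diff_card_le_card_Diff[OF finH])
  then have c1: "real (card (Gs (ws ! ?i) (vs ! ?i))) - real (card ?H) \<le> real (card (Fsel U ws vs pre))"
    by linarith
  have c2: "card ?H \<le> card ?Y * (n-1)^(k-2)" by (rule hit[OF fY])
  have c3: "card ?Y * (n-1)^(k-2) \<le> (card U + 2*(k-1) + (k-1)*(k-1)) * (n-1)^(k-2)"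
    using cY by (rule mult_right_mono) simp
  have "real (card ?H) \<le> real ((card U + 2*(k-1) + (k-1)*(k-1)) * (n-1)^(k-2))"
    using c2 c3 by linarith
  then have c4: "real (card ?H) \<le> real (card U + 2*(k-1) + (k-1)*(k-1)) * real ((n-1)^(k-2))"
    by simp
  have c5: "real (card U + 2*(k-1) + (k-1)*(k-1)) * real ((n-1)^(k-2)) + 2 * real ((n-1)^(k-2))
      = real (2 + card U + 2*(k-1) + (k-1)*(k-1)) * real ((n-1)^(k-2))"
    by (simp add: algebra_simps)
  show ?thesis using G_lb[OF wi(1) vi(1) ne] c1 c4 c5 by linarith
qed

end


context setting begin

lemma Full_fin: "finite Full"
  unfolding Full_def
  by (intro finite_cartesian_product finite_lists_length_eq) (auto intro: finite_subset[of _ "Pow {..<n}"])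

lemma card_Full: "real (card Full) \<le> real n ^ ((k-1)*k)"
proof -
  have fK: "finite {S. S \<subseteq> {..<n} \<and> card S = k-1}" by (rule finite_subset[of _ "Pow {..<n}"]) auto
  have "card Full = n^(k-1) * (n choose (k-1))^(k-1)"
    unfolding Full_def card_cartesian_product
    using card_lists_length_eq[of "{..<n}" "k-1"] card_lists_length_eq[OF fK, of "k-1"]
      n_subsets[of "{..<n}" "k-1"] by simp
  also have "\<dots> \<le> n^(k-1) * (n^(k-1))^(k-1)"
    using nk by (intro mult_left_mono power_mono binomial_le_pow) auto
  also have "\<dots> = n^((k-1)*k)"
  proof -
    have "(k-1)*k = (k-1) + (k-1)*(k-1)" using k2 by (cases k) auto
    then show ?thesis by (simp add: power_add power_mult)
  qed
  finally show ?thesis by (metis of_nat_le_iff of_nat_power)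
qed

lemma Cset_sub: "Cset U \<subseteq> Full" unfolding Cset_def by auto
lemma good_sub: "good U w ws \<subseteq> Cset U" unfolding good_def by auto

lemma density:
  assumes ot: "ordered_tuple k {..<n} w ws" and fU: "finite U"
    and cond: "real (2 + card U + 2*(k-1) + (k-1)*(k-1)) * real (k-1)^(k-1) \<le> \<epsilon> * real (n-1)"
  shows "(1/2) * \<epsilon>^(k-1) * (1/(2*real(k-1)))^((k-1)*k) * real n ^ ((k-1)*k) \<le> real (card (good U w ws))"
proof -
  define D where "D = real ((n-1) choose (k-1))"
  define B where "B = real ((n-1)^(k-2))"
  define c where "c = real (2 + card U + 2*(k-1) + (k-1)*(k-1))"
  define Mm where "Mm = real (k-1)^(k-1)"
  have D0: "D \<ge> 0" "B \<ge> 0" "c \<ge> 0" "Mm \<ge> 0" unfolding D_def B_def c_def Mm_def by auto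
  have n1: "real (n-1) > 0" using nk k2 by simp
  have hB: "B * real (n-1) \<le> Mm * D" using BndD unfolding B_def Mm_def D_def .
  have "c * B * real (n-1) \<le> c * (Mm * D)" using hB D0 by (simp add: mult_left_mono mult.assoc)
  also have "\<dots> = (c * Mm) * D" by simp
  also have "\<dots> \<le> (\<epsilon> * real (n-1)) * D" using cond D0 unfolding c_def Mm_def by (intro mult_right_mono) auto
  finally have "c * B * real (n-1) \<le> \<epsilon> * D * real (n-1)" by (simp add: algebra_simps)
  then have hc: "c * B \<le> \<epsilon> * D" using n1 by simp
  let ?Y0 = "U \<union> set ws"
  have lws: "length ws = k-1" using ot unfolding ordered_tuple_def by simp
  have w: "w < n" using ot unfolding ordered_tuple_def by auto
  have "card ?Y0 \<le> card U + card (set ws)" by (rule card_Un_le)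
  also have "\<dots> \<le> card U + (k-1)" using card_length[of ws] lws by simp
  finally have "card ?Y0 \<le> 2 + card U + 2*(k-1) + (k-1)*(k-1)" by linarith
  then have "real (card ?Y0) \<le> c" unfolding c_def by (rule of_nat_mono)
  then have "real (card ?Y0) * B \<le> c * B" using D0 by (intro mult_right_mono) auto
  moreover have "(1/2 + \<epsilon>) * D - real (card ?Y0) * B \<le> real (card (Avs w ?Y0))"
    using Avs_lb[OF w, of ?Y0] fU unfolding D_def B_def by simp
  moreover have "(1/2 + \<epsilon>) * D = D/2 + \<epsilon> * D" by (simp add: algebra_simps)
  ultimately have A: "D / 2 \<le> real (card (Avs w ?Y0))" using hc by linarith
  have S: "(\<epsilon> * D) ^ (k-1) \<le> real (card (Seqs U ws vs))" if vs: "vs \<in> Avs w ?Y0" for vs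
  proof -
    have "(\<epsilon> * D) ^ (k-1) \<le> real (card {xs. length xs = k-1 \<and> (\<forall>i<k-1. xs ! i \<in> Fsel U ws vs (take i xs))})"
    proof (rule card_seq_ge[of "Pow {..<n}"])
      show "finite (Pow {..<n})" by simp
      show "Fsel U ws vs xs \<subseteq> Pow {..<n}" for xs using Fsel_sub Gs_sub by blast
      show "0 \<le> \<epsilon> * D" using eps D0 by simp
      fix xs assume "length xs < k-1" "\<forall>i<length xs. xs ! i \<in> Fsel U ws vs (take i xs)"
      from Fsel_lb[OF ot vs fU this] show "\<epsilon> * D \<le> real (card (Fsel U ws vs xs))"
        using hc unfolding D_def B_def c_def by linarith
    qed
    then show ?thesis unfolding Seqs_def .
  qed
  have finSeqs: "finite (Seqs U ws vs)" for vs
  proof (rule finite_subset[OF _ finite_lists_length_eq[of "Pow {..<n}" "k-1"]])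
    show "Seqs U ws vs \<subseteq> {xs. set xs \<subseteq> Pow {..<n} \<and> length xs = k - 1}"
    proof
      fix xs assume xs: "xs \<in> Seqs U ws vs"
      have "set xs \<subseteq> Pow {..<n}"
      proof
        fix S assume "S \<in> set xs"
        then obtain i where i: "i < length xs" "S = xs ! i" by (metis in_set_conv_nth)
        have "xs ! i \<in> Fsel U ws vs (take i xs)" using xs i unfolding Seqs_def by auto
        then show "S \<in> Pow {..<n}" using i Fsel_sub Gs_sub by blast
      qed
      then show "xs \<in> {xs. set xs \<subseteq> Pow {..<n} \<and> length xs = k - 1}" using xs unfolding Seqs_def by simp
    qed
  qed simp
  have sub: "Sigma (Avs w ?Y0) (Seqs U ws) \<subseteq> good U w ws"
    using mem_good[OF ot] by auto
  have fing: "finite (good U w ws)"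
    using finite_subset[OF good_sub finite_subset[OF Cset_sub Full_fin]] .
  have "card (Sigma (Avs w ?Y0) (Seqs U ws)) = (\<Sum>vs\<in>Avs w ?Y0. card (Seqs U ws vs))"
    using Avs_fin finSeqs by (intro card_SigmaI) auto
  then have "real (card (Sigma (Avs w ?Y0) (Seqs U ws))) = (\<Sum>vs\<in>Avs w ?Y0. real (card (Seqs U ws vs)))"
    by simp
  also have "\<dots> \<ge> (\<Sum>vs\<in>Avs w ?Y0. (\<epsilon> * D) ^ (k-1))" using S by (intro sum_mono) auto
  finally have "real (card (Avs w ?Y0)) * (\<epsilon> * D) ^ (k-1) \<le> real (card (Sigma (Avs w ?Y0) (Seqs U ws)))"
    by simp
  moreover have "(D/2) * (\<epsilon> * D) ^ (k-1) \<le> real (card (Avs w ?Y0)) * (\<epsilon> * D) ^ (k-1)"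
    using A eps D0 by (intro mult_right_mono) auto
  moreover have "card (Sigma (Avs w ?Y0) (Seqs U ws)) \<le> card (good U w ws)"
    by (rule card_mono[OF fing sub])
  ultimately have G: "(D/2) * (\<epsilon> * D) ^ (k-1) \<le> real (card (good U w ws))"
    by (meson of_nat_le_iff order_trans)
  define P where "P = real n / (2 * real (k-1))"
  have P0: "P \<ge> 0" unfolding P_def by simp
  have "P \<le> real (n-1) / real (k-1)"
  proof -
    have "n \<ge> 2" using nk k2 by simp
    then have "real n \<ge> 2" by simp
    then have a: "real n \<le> 2 * (real n - 1)" by (simp add: algebra_simps)
    have b: "real k - 1 > 0" using k2 by simp
    have "real n * (real k - 1) \<le> 2 * (real n - 1) * (real k - 1)"
      using mult_right_mono[OF a, of "real k - 1"] b by simp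
    then show ?thesis unfolding P_def using nk k2 b by (simp add: divide_simps algebra_simps)
  qed
  also have "(real (n-1) / real (k-1)) ^ (k-1) \<le> D"
    unfolding D_def using nk by (intro binomial_ge_n_over_k_pow_k) simp
  ultimately have PD: "P ^ (k-1) \<le> D" using P0 by (meson order_trans power_mono)
  have Pk: "(P ^ (k-1)) ^ k \<le> D ^ k" using PD P0 by (intro power_mono) auto
  have "(D/2) * (\<epsilon> * D) ^ (k-1) = (1/2) * \<epsilon>^(k-1) * D ^ k"
  proof -
    have "k = Suc (k-1)" using k2 by simp
    then have "D ^ k = D * D^(k-1)" by (metis power_Suc)
    then show ?thesis by (simp add: power_mult_distrib)
  qed
  moreover have "(P ^ (k-1)) ^ k = (1/(2*real(k-1)))^((k-1)*k) * real n ^ ((k-1)*k)"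
    unfolding P_def by (simp add: power_mult[symmetric] power_divide field_simps)
  moreover have "(1/2) * \<epsilon>^(k-1) * (P ^ (k-1)) ^ k \<le> (1/2) * \<epsilon>^(k-1) * D ^ k"
    using Pk eps by (intro mult_left_mono) auto
  ultimately show ?thesis using G by (simp add: mult.assoc)
qed

end


context setting begin

definition Xs :: "(nat \<times> nat list) set" where
  "Xs = {(w, ws). ordered_tuple k {..<n} w ws}"

definition hh :: "nat set list set \<Rightarrow> nat \<times> nat list \<Rightarrow> nat" where
  "hh \<A> x = card (absorbing_set k E (fst x) (snd x) \<inter> \<A>)"

definition Phi :: "nat set list set \<Rightarrow> real" where
  "Phi \<A> = (\<Sum>x\<in>Xs. (1/2::real) ^ hh \<A> x)"

definition gam :: real where
  "gam = (1/2) * \<epsilon>^(k-1) * (1/(2*real(k-1)))^((k-1)*k)"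

lemma gam_pos: "gam > 0" unfolding gam_def using eps k2 by simp

lemma Xs_fin: "finite Xs" and Xs_card: "card Xs \<le> n^k"
proof -
  have sub: "Xs \<subseteq> {..<n} \<times> {ws. set ws \<subseteq> {..<n} \<and> length ws = k-1}"
    unfolding Xs_def ordered_tuple_def by auto
  have f: "finite ({..<n} \<times> {ws. set ws \<subseteq> {..<n} \<and> length ws = k-1})"
    by (intro finite_cartesian_product finite_lists_length_eq) auto
  show "finite Xs" using finite_subset[OF sub f] .
  have "card Xs \<le> card ({..<n} \<times> {ws. set ws \<subseteq> {..<n} \<and> length ws = k-1})" by (rule card_mono[OF f sub])
  also have "\<dots> = n * n^(k-1)" unfolding card_cartesian_product using card_lists_length_eq[of "{..<n}" "k-1"] by simp
  also have "\<dots> = n^k"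
  proof -
    have kk: "Suc (k-1) = k" using k2 by simp
    have "n^k = n^(Suc (k-1))" by (simp only: kk)
    then show ?thesis by simp
  qed
  finally show "card Xs \<le> n^k" .
qed

lemma x0: "(0, [1..<k]) \<in> Xs"
  unfolding Xs_def ordered_tuple_def using nk by auto

lemma step:
  assumes fA: "finite \<A>" and inv: "\<forall>T\<in>\<A>. \<Union>(set T) \<subseteq> U" and fU: "finite U"
    and cond: "real (2 + card U + 2*(k-1) + (k-1)*(k-1)) * real (k-1)^(k-1) \<le> \<epsilon> * real (n-1)"
  shows "\<exists>T. T \<notin> \<A> \<and> absorbing_tuple_of k {..<n} E T \<and> \<Union>(set T) \<inter> U = {} \<and> \<Union>(set T) \<noteq> {}
     \<and> Phi (insert T \<A>) \<le> (1 - min gam 1 / 2) * Phi \<A>"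
proof -
  let ?\<gamma> = "min gam 1"
  let ?C = "Cset U"
  let ?g = "\<lambda>x. good U (fst x) (snd x)"
  have fC: "finite ?C" using finite_subset[OF Cset_sub Full_fin] .
  have cC: "real (card ?C) \<le> real n ^ ((k-1)*k)"
    using card_Full card_mono[OF Full_fin Cset_sub[of U]] by (meson of_nat_le_iff order_trans)
  have dens: "gam * real n ^ ((k-1)*k) \<le> real (card (?g x))" if "x \<in> Xs" for x
  proof -
    obtain w ws where x: "x = (w, ws)" by (cases x)
    have "ordered_tuple k {..<n} w ws" using that x unfolding Xs_def by simp
    from density[OF this fU cond] show ?thesis using x unfolding gam_def by simp
  qed
  have ne: "?C \<noteq> {}"
  proof -
    have "gam * real n ^ ((k-1)*k) > 0" using gam_pos nk by simp
    then have "card (?g (0, [1..<k])) > 0" using dens[OF x0] by linarith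
    then have "?g (0, [1..<k]) \<noteq> {}" by auto
    then show ?thesis using good_sub by blast
  qed
  have "\<exists>c\<in>?C. (\<Sum>x\<in>Xs. (1/2::real) ^ (hh \<A> x + (if c \<in> ?g x then 1 else 0)))
                 \<le> (1 - ?\<gamma>/2) * (\<Sum>x\<in>Xs. (1/2::real) ^ hh \<A> x)"
  proof (rule avg_step[OF Xs_fin fC ne])
    show "?g x \<subseteq> ?C" for x using good_sub by blast
    fix x assume x: "x \<in> Xs"
    have "?\<gamma> * real (card ?C) \<le> gam * real n ^ ((k-1)*k)"
      using cC gam_pos by (intro mult_mono) auto
    then show "?\<gamma> * real (card ?C) \<le> real (card (?g x))" using dens[OF x] by linarith
  qed
  then obtain c where c: "c \<in> ?C" and cb: "(\<Sum>x\<in>Xs. (1/2::real) ^ (hh \<A> x + (if c \<in> ?g x then 1 else 0)))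
                 \<le> (1 - ?\<gamma>/2) * Phi \<A>" unfolding Phi_def by blast
  define T where "T = Tof c"
  have Tabs: "absorbing_tuple_of k {..<n} E T" and TU: "\<Union>(set T) \<inter> U = {}"
    using c unfolding T_def Cset_def by auto
  have lT: "length T = k-1" unfolding T_def Tof_def by simp
  have T0: "T ! 0 \<noteq> {}" using k2 unfolding T_def Tof_def by simp
  have "T ! 0 \<in> set T" using lT k2 by simp
  then have Tne: "\<Union>(set T) \<noteq> {}" using T0 by blast
  have TA: "T \<notin> \<A>"
  proof
    assume "T \<in> \<A>"
    then have "\<Union>(set T) \<subseteq> U" using inv by blast
    then show False using TU Tne by blast
  qed
  have hins: "hh (insert T \<A>) x = hh \<A> x + (if c \<in> ?g x then 1 else 0)" for x
  proof -
    have iff: "c \<in> ?g x \<longleftrightarrow> T \<in> absorbing_set k E (fst x) (snd x)"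
      using c unfolding good_def T_def by auto
    show ?thesis
    proof (cases "T \<in> absorbing_set k E (fst x) (snd x)")
      case True
      then have "absorbing_set k E (fst x) (snd x) \<inter> insert T \<A> = insert T (absorbing_set k E (fst x) (snd x) \<inter> \<A>)"
        by auto
      then show ?thesis unfolding hh_def using True iff TA fA by simp
    next
      case False
      then have "absorbing_set k E (fst x) (snd x) \<inter> insert T \<A> = absorbing_set k E (fst x) (snd x) \<inter> \<A>"
        by auto
      then show ?thesis unfolding hh_def using False iff by simp
    qed
  qed
  have "Phi (insert T \<A>) \<le> (1 - ?\<gamma>/2) * Phi \<A>" unfolding Phi_def hins using cb unfolding Phi_def .
  then show ?thesis using TA Tabs TU Tne by blast
qed

end


context setting begin

lemma T_card:
  assumes "absorbing_tuple_of k {..<n} E T"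
  shows "card (\<Union>(set T)) \<le> (k-1)*k"
proof -
  obtain w ws where "absorbing k E w ws T" using assms unfolding absorbing_tuple_of_def by blast
  then have lT: "length T = k-1" and sT: "set T \<subseteq> E" unfolding absorbing_def by auto
  have "card (\<Union>(set T)) \<le> sum card (set T)" by (rule card_Union_le_sum_card)
  also have "\<dots> = (\<Sum>S\<in>set T. k)" using sT E_card by (intro sum.cong) auto
  also have "\<dots> = card (set T) * k" by simp
  also have "\<dots> \<le> (k-1) * k" using card_length[of T] lT by (intro mult_right_mono) auto
  finally show ?thesis .
qed

lemma T_fin:
  assumes "absorbing_tuple_of k {..<n} E T"
  shows "finite (\<Union>(set T))"
proof -
  obtain w ws where "absorbing k E w ws T" using assms unfolding absorbing_tuple_of_def by blast
  then have sT: "set T \<subseteq> E" unfolding absorbing_def by auto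
  have "\<Union>(set T) \<subseteq> {..<n}" using sT E_sub by blast
  then show ?thesis using finite_subset by blast
qed

lemma iter:
  assumes cU: "real (2 + j0*((k-1)*k) + 2*(k-1) + (k-1)*(k-1)) * real (k-1)^(k-1) \<le> \<epsilon> * real (n-1)"
  shows "j \<le> j0 \<Longrightarrow> \<exists>\<A> U. finite \<A> \<and> card \<A> = j \<and>
     (\<forall>T\<in>\<A>. absorbing_tuple_of k {..<n} E T \<and> \<Union>(set T) \<subseteq> U) \<and>
     tuples_vertex_disjoint \<A> \<and> finite U \<and> card U \<le> j*((k-1)*k) \<and>
     Phi \<A> \<le> real (card Xs) * (1 - min gam 1 / 2) ^ j"
proof (induction j)
  case 0
  have "Phi {} = real (card Xs)" unfolding Phi_def hh_def by simp
  then show ?case by (intro exI[of _ "{}"]) (auto simp: tuples_vertex_disjoint_def)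
next
  case (Suc j)
  then obtain \<A> U where fA: "finite \<A>" and cA: "card \<A> = j"
    and inv: "\<forall>T\<in>\<A>. absorbing_tuple_of k {..<n} E T \<and> \<Union>(set T) \<subseteq> U"
    and disj: "tuples_vertex_disjoint \<A>" and fU: "finite U" and cU': "card U \<le> j*((k-1)*k)"
    and ph: "Phi \<A> \<le> real (card Xs) * (1 - min gam 1 / 2) ^ j" by auto
  have "card U \<le> j0*((k-1)*k)" using cU' Suc.prems by (meson le_trans mult_le_mono1 Suc_leD)
  then have "2 + card U + 2*(k-1) + (k-1)*(k-1) \<le> 2 + j0*((k-1)*k) + 2*(k-1) + (k-1)*(k-1)"
    by simp
  then have "real (2 + card U + 2*(k-1) + (k-1)*(k-1)) \<le> real (2 + j0*((k-1)*k) + 2*(k-1) + (k-1)*(k-1))"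
    by (rule of_nat_mono)
  then have cond: "real (2 + card U + 2*(k-1) + (k-1)*(k-1)) * real (k-1)^(k-1) \<le> \<epsilon> * real (n-1)"
    using cU by (meson mult_right_mono order_trans of_nat_0_le_iff zero_le_power)
  obtain T where TA: "T \<notin> \<A>" and Tabs: "absorbing_tuple_of k {..<n} E T" and TU: "\<Union>(set T) \<inter> U = {}"
    and Tph: "Phi (insert T \<A>) \<le> (1 - min gam 1 / 2) * Phi \<A>"
    using step[OF fA _ fU cond] inv by blast
  let ?A' = "insert T \<A>" and ?U' = "U \<union> \<Union>(set T)"
  have "finite ?A'" using fA by simp
  moreover have "card ?A' = Suc j" using fA TA cA by simp
  moreover have "\<forall>T'\<in>?A'. absorbing_tuple_of k {..<n} E T' \<and> \<Union>(set T') \<subseteq> ?U'" using inv Tabs by auto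
  moreover have "tuples_vertex_disjoint ?A'"
    unfolding tuples_vertex_disjoint_def
  proof (intro ballI impI)
    fix T1 T2 assume T1: "T1 \<in> ?A'" and T2: "T2 \<in> ?A'" and ne: "T1 \<noteq> T2"
    show "\<Union>(set T1) \<inter> \<Union>(set T2) = {}"
    proof (cases "T1 = T")
      case True
      then have "T2 \<in> \<A>" using T2 ne by auto
      then show ?thesis using True inv TU by blast
    next
      case False
      then have T1A: "T1 \<in> \<A>" using T1 by auto
      show ?thesis
      proof (cases "T2 = T")
        case True
        then show ?thesis using T1A inv TU by blast
      next
        case False
        then have "T2 \<in> \<A>" using T2 by auto
        then show ?thesis using T1A disj ne unfolding tuples_vertex_disjoint_def by blast
      qed
    qed
  qed
  moreover have "finite ?U'" using T_fin[OF Tabs] fU by simp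
  moreover have "card ?U' \<le> Suc j*((k-1)*k)"
  proof -
    have "card ?U' \<le> card U + card (\<Union>(set T))" by (rule card_Un_le)
    then show ?thesis using T_card[OF Tabs] cU' by simp
  qed
  moreover have "Phi ?A' \<le> real (card Xs) * (1 - min gam 1 / 2) ^ Suc j"
  proof -
    have "(1 - min gam 1 / 2) * Phi \<A> \<le> (1 - min gam 1 / 2) * (real (card Xs) * (1 - min gam 1 / 2) ^ j)"
      using ph by (intro mult_left_mono) auto
    then show ?thesis using Tph by (simp add: algebra_simps)
  qed
  ultimately show ?case by blast
qed

end


lemma final_ineq:
  fixes \<gamma> \<beta> \<rho> :: real and n k :: nat
  assumes g: "0 < \<gamma>" "\<gamma> \<le> 1" and b: "\<beta> > 0" and r: "0 < \<rho>" "\<rho> \<le> \<beta>*\<gamma>/8" and n1: "n \<ge> 1"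
    and big: "sqrt (real n) > (2 * real k + 1) / (3*\<beta>*\<gamma>/8)"
  shows "real n ^ k * (1 - \<gamma>/2) ^ nat \<lfloor>\<beta> * real n\<rfloor> < (1/2) powr (\<rho> * real n)"
proof -
  define c where "c = 3*\<beta>*\<gamma>/8"
  define s where "s = sqrt (real n)"
  define t where "t = nat \<lfloor>\<beta> * real n\<rfloor>"
  have c0: "c > 0" unfolding c_def using b g by simp
  have s1: "s \<ge> 1" unfolding s_def using n1 by simp
  have ss: "s * s = real n" unfolding s_def by simp
  have ht: "real t \<ge> \<beta> * real n - 1" unfolding t_def using b by linarith
  have r0: "1 - \<gamma>/2 > 0" using g by simp
  have lnr: "ln (1 - \<gamma>/2) \<le> - \<gamma>/2" using ln_le_minus_one[OF r0] by simp
  have lnn: "ln (real n) \<le> 2 * s"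
  proof -
    have "ln s = ln (real n) / 2" unfolding s_def by (rule ln_sqrt) simp
    moreover have "ln s \<le> s - 1" using s1 by (intro ln_le_minus_one) simp
    ultimately show ?thesis by simp
  qed
  have cs: "c * s > 2 * real k + 1" using big c0 unfolding c_def[symmetric] s_def[symmetric]
    by (simp add: divide_less_eq mult.commute)
  have "c * real n = (c * s) * s" using ss by (simp add: mult.assoc)
  also have "\<dots> > (2 * real k + 1) * s" using cs s1 by (intro mult_strict_right_mono) auto
  finally have k1: "c * real n > (2 * real k + 1) * s" .
  have k2: "real k * ln (real n) \<le> real k * (2 * s)" using lnn by (intro mult_left_mono) auto
  have key: "real k * ln (real n) + \<gamma>/2 < c * real n"
    using k1 k2 s1 g by (simp add: algebra_simps)
  have t1: "real t * ln (1 - \<gamma>/2) \<le> real t * (- \<gamma>/2)" using lnr by (intro mult_left_mono) auto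
  have t2: "real t * (- \<gamma>/2) \<le> (\<beta> * real n - 1) * (- \<gamma>/2)" using ht g by (intro mult_right_mono_neg) auto
  have l2: "ln 2 \<le> (1::real)" using ln_le_minus_one[of 2] by simp
  have rn0: "\<rho> * real n \<ge> 0" using r by simp
  have p1: "\<rho> * real n * ln 2 \<le> \<rho> * real n" using mult_left_mono[OF l2 rn0] by simp
  have p2: "\<rho> * real n \<le> \<beta>*\<gamma>/8 * real n" using r by (intro mult_right_mono) auto
  have lhs: "ln (real n ^ k * (1 - \<gamma>/2) ^ t) = real k * ln (real n) + real t * ln (1 - \<gamma>/2)"
    using n1 r0 by (simp add: ln_mult ln_realpow)
  have rhs: "ln ((1/2) powr (\<rho> * real n)) = - (\<rho> * real n * ln 2)"
    by (simp add: ln_powr ln_div)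
  have "ln (real n ^ k * (1 - \<gamma>/2) ^ t) < ln ((1/2) powr (\<rho> * real n))"
    unfolding lhs rhs using key t1 t2 p1 p2 unfolding c_def by (simp add: algebra_simps)
  then show ?thesis unfolding t_def[symmetric] using n1 r0
    by (subst (asm) ln_less_cancel_iff) auto
qed

theorem lemma6p3:
  fixes k d :: nat and \<epsilon> :: real
  assumes "1 \<le> d" and "d < k" and "\<epsilon> > 0"
  shows "\<exists>\<beta>0 > 0. \<forall>\<beta>. 0 < \<beta> \<and> \<beta> \<le> \<beta>0 \<longrightarrow>
          (\<exists>\<rho>0 > 0. \<forall>\<rho>. 0 < \<rho> \<and> \<rho> \<le> \<rho>0 \<longrightarrow>
            (\<exists>n0::nat. \<forall>n \<ge> n0. \<forall>E :: nat set set.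
               kgraph k {..<n} E \<longrightarrow>
               real (min_deg {..<n} E d) \<ge> (1/2 + \<epsilon>) * real ((n - d) choose (k - d)) \<longrightarrow>
               (\<exists>\<A>. finite \<A> \<and> (\<forall>T\<in>\<A>. absorbing_tuple_of k {..<n} E T) \<and>
                   tuples_vertex_disjoint \<A> \<and>
                   real (card \<A>) \<le> \<beta> * real n \<and>
                   (\<forall>w ws. ordered_tuple k {..<n} w ws \<longrightarrow>
                      real (card (absorbing_set k E w ws \<inter> \<A>)) \<ge> \<rho> * real n))))"
proof -
  define m where "m = k - 1"
  define Mm where "Mm = real m ^ m"
  define g0 where "g0 = (1/2) * \<epsilon>^(k-1) * (1/(2*real(k-1)))^((k-1)*k)"
  define \<gamma> where "\<gamma> = min g0 1"
  have m1: "m \<ge> 1" unfolding m_def using assms by simp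
  have Mm1: "Mm \<ge> 1" unfolding Mm_def using m1 by simp
  have g00: "g0 > 0" unfolding g0_def using assms by simp
  have \<gamma>: "0 < \<gamma>" "\<gamma> \<le> 1" unfolding \<gamma>_def using g00 by auto
  define \<beta>0 where "\<beta>0 = \<epsilon> / (4 * real k * real m * Mm)"
  have kpos: "real k > 0" using assms by simp
  have \<beta>0: "\<beta>0 > 0" unfolding \<beta>0_def using assms m1 Mm1 kpos by simp
  show ?thesis
  proof (rule exI[of _ \<beta>0], intro conjI allI impI)
    show "\<beta>0 > 0" by (rule \<beta>0)
    fix \<beta> assume \<beta>: "0 < \<beta> \<and> \<beta> \<le> \<beta>0"
    define \<rho>0 where "\<rho>0 = \<beta> * \<gamma> / 8"
    show "\<exists>\<rho>0 > 0. \<forall>\<rho>. 0 < \<rho> \<and> \<rho> \<le> \<rho>0 \<longrightarrow>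
            (\<exists>n0::nat. \<forall>n \<ge> n0. \<forall>E :: nat set set.
               kgraph k {..<n} E \<longrightarrow>
               real (min_deg {..<n} E d) \<ge> (1/2 + \<epsilon>) * real ((n - d) choose (k - d)) \<longrightarrow>
               (\<exists>\<A>. finite \<A> \<and> (\<forall>T\<in>\<A>. absorbing_tuple_of k {..<n} E T) \<and>
                   tuples_vertex_disjoint \<A> \<and>
                   real (card \<A>) \<le> \<beta> * real n \<and>
                   (\<forall>w ws. ordered_tuple k {..<n} w ws \<longrightarrow>
                      real (card (absorbing_set k E w ws \<inter> \<A>)) \<ge> \<rho> * real n)))"
    proof (rule exI[of _ \<rho>0], intro conjI allI impI)
      show "\<rho>0 > 0" unfolding \<rho>0_def using \<beta> \<gamma> by simp
      fix \<rho> assume \<rho>: "0 < \<rho> \<and> \<rho> \<le> \<rho>0"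
      define N1 where "N1 = nat \<lceil>(4/(3*\<epsilon>)) * ((2 + 2*real m + real m * real m) * Mm + \<epsilon>)\<rceil>"
      define N2 where "N2 = nat \<lceil>((2 * real k + 1) / (3*\<beta>*\<gamma>/8))^2\<rceil> + 1"
      show "\<exists>n0::nat. \<forall>n \<ge> n0. \<forall>E :: nat set set.
               kgraph k {..<n} E \<longrightarrow>
               real (min_deg {..<n} E d) \<ge> (1/2 + \<epsilon>) * real ((n - d) choose (k - d)) \<longrightarrow>
               (\<exists>\<A>. finite \<A> \<and> (\<forall>T\<in>\<A>. absorbing_tuple_of k {..<n} E T) \<and>
                   tuples_vertex_disjoint \<A> \<and>
                   real (card \<A>) \<le> \<beta> * real n \<and>
                   (\<forall>w ws. ordered_tuple k {..<n} w ws \<longrightarrow>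
                      real (card (absorbing_set k E w ws \<inter> \<A>)) \<ge> \<rho> * real n))"
      proof (intro exI[of _ "max (k+1) (max N1 N2)"] allI impI)
        fix n :: nat and E :: "nat set set"
        assume n: "max (k+1) (max N1 N2) \<le> n" and kg: "kgraph k {..<n} E"
          and md: "real (min_deg {..<n} E d) \<ge> (1/2 + \<epsilon>) * real ((n - d) choose (k - d))"
        have nk: "k < n" using n by simp
        interpret S: setting k d \<epsilon> n E
          using assms kg md nk by unfold_locales auto
        have gam: "S.gam = g0" unfolding S.gam_def g0_def by simp
        define j0 where "j0 = nat \<lfloor>\<beta> * real n\<rfloor>"
        have j0b: "real j0 \<le> \<beta> * real n" unfolding j0_def using \<beta> by simp
        have cU: "real (2 + j0*((k-1)*k) + 2*(k-1) + (k-1)*(k-1)) * real (k-1)^(k-1) \<le> \<epsilon> * real (n-1)"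
        proof -
          have a: "real j0 * (real m * real k) * Mm \<le> \<epsilon> * real n / 4"
          proof -
            have "real j0 * (real m * real k * Mm) \<le> (\<beta> * real n) * (real m * real k * Mm)"
              using j0b Mm1 by (intro mult_right_mono) auto
            also have "\<dots> \<le> (\<beta>0 * real n) * (real m * real k * Mm)"
              using \<beta> Mm1 by (intro mult_right_mono) auto
            also have "\<dots> = \<epsilon> * real n / 4" unfolding \<beta>0_def using m1 Mm1 kpos by (simp add: field_simps)
            finally show ?thesis by (simp add: mult.assoc)
          qed
          have "real N1 \<ge> (4/(3*\<epsilon>)) * ((2 + 2*real m + real m * real m) * Mm + \<epsilon>)"
            unfolding N1_def by linarith
          then have "real n \<ge> (4/(3*\<epsilon>)) * ((2 + 2*real m + real m * real m) * Mm + \<epsilon>)" using n by linarith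
          then have "3*\<epsilon>/4 * real n \<ge> (2 + 2*real m + real m * real m) * Mm + \<epsilon>"
            using assms by (simp add: field_simps)
          then have b: "(2 + 2*real m + real m * real m) * Mm \<le> 3*\<epsilon>/4 * real n - \<epsilon>" by linarith
          have "real (2 + j0*((k-1)*k) + 2*(k-1) + (k-1)*(k-1)) * real (k-1)^(k-1)
              = real j0 * (real m * real k) * Mm + (2 + 2*real m + real m * real m) * Mm"
          proof -
            have e1: "2 + j0*((k-1)*k) + 2*(k-1) + (k-1)*(k-1) = 2 + j0*(m*k) + 2*m + m*m" unfolding m_def by simp
            have e2: "real (2 + j0*(m*k) + 2*m + m*m) = 2 + real j0 * (real m * real k) + 2 * real m + real m * real m"
              by simp
            have e3: "real (k-1)^(k-1) = Mm" unfolding Mm_def m_def by simp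
            show ?thesis unfolding e1 e2 e3 by (simp add: algebra_simps)
          qed
          also have "\<dots> \<le> \<epsilon> * real n / 4 + (3*\<epsilon>/4 * real n - \<epsilon>)" using a b by linarith
          also have "\<dots> = \<epsilon> * real (n-1)" using nk by (simp add: algebra_simps of_nat_diff)
          finally show ?thesis .
        qed
        obtain \<A> U where fA: "finite \<A>" and cA: "card \<A> = j0"
          and inv: "\<forall>T\<in>\<A>. absorbing_tuple_of k {..<n} E T \<and> \<Union>(set T) \<subseteq> U"
          and disj: "tuples_vertex_disjoint \<A>"
          and ph: "S.Phi \<A> \<le> real (card S.Xs) * (1 - min S.gam 1 / 2) ^ j0"
          using S.iter[OF cU, of j0] by blast
        have ph2: "S.Phi \<A> \<le> real n ^ k * (1 - \<gamma> / 2) ^ j0"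
        proof -
          have "real (card S.Xs) \<le> real n ^ k" using S.Xs_card by (metis of_nat_le_iff of_nat_power)
          then have mm: "real (card S.Xs) * (1 - \<gamma> / 2) ^ j0 \<le> real n ^ k * (1 - \<gamma> / 2) ^ j0"
            using \<gamma> by (intro mult_right_mono) auto
          have h1: "S.Phi \<A> \<le> real (card S.Xs) * (1 - \<gamma> / 2) ^ j0" using ph gam unfolding \<gamma>_def by simp
          show ?thesis using h1 mm by (rule order_trans)
        qed
        have sq: "sqrt (real n) > (2 * real k + 1) / (3*\<beta>*\<gamma>/8)"
        proof (rule real_less_rsqrt)
          have "real N2 > ((2 * real k + 1) / (3*\<beta>*\<gamma>/8))^2" unfolding N2_def by linarith
          then show "((2 * real k + 1) / (3*\<beta>*\<gamma>/8))^2 < real n" using n by linarith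
        qed
        have fin: "real n ^ k * (1 - \<gamma>/2) ^ j0 < (1/2) powr (\<rho> * real n)"
          unfolding j0_def using final_ineq[OF \<gamma> conjunct1[OF \<beta>] conjunct1[OF \<rho>] _ _ sq] \<rho> nk
          unfolding \<rho>0_def by simp
        show "\<exists>\<A>. finite \<A> \<and> (\<forall>T\<in>\<A>. absorbing_tuple_of k {..<n} E T) \<and>
                   tuples_vertex_disjoint \<A> \<and>
                   real (card \<A>) \<le> \<beta> * real n \<and>
                   (\<forall>w ws. ordered_tuple k {..<n} w ws \<longrightarrow>
                      real (card (absorbing_set k E w ws \<inter> \<A>)) \<ge> \<rho> * real n)"
        proof (intro exI[of _ \<A>] conjI allI impI)
          show "finite \<A>" by (rule fA)
          show "\<forall>T\<in>\<A>. absorbing_tuple_of k {..<n} E T" using inv by blast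
          show "tuples_vertex_disjoint \<A>" by (rule disj)
          show "real (card \<A>) \<le> \<beta> * real n" using cA j0b by simp
          fix w ws assume ot: "ordered_tuple k {..<n} w ws"
          then have x: "(w, ws) \<in> S.Xs" unfolding S.Xs_def by simp
          have "(1/2::real) ^ S.hh \<A> (w, ws) \<le> S.Phi \<A>"
            unfolding S.Phi_def by (rule member_le_sum[OF x]) (auto intro: S.Xs_fin)
          then have lt: "(1/2::real) ^ S.hh \<A> (w, ws) < (1/2) powr (\<rho> * real n)" using ph2 fin by linarith
          show "\<rho> * real n \<le> real (card (absorbing_set k E w ws \<inter> \<A>))"
          proof (rule ccontr)
            assume "\<not> ?thesis"
            then have "real (S.hh \<A> (w, ws)) \<le> \<rho> * real n" unfolding S.hh_def by simp
            then have "(1/2::real) powr (\<rho> * real n) \<le> (1/2) powr (real (S.hh \<A> (w, ws)))"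
              by (intro powr_mono') auto
            also have "\<dots> = (1/2) ^ S.hh \<A> (w, ws)" by (simp add: powr_realpow)
            finally show False using lt by simp
          qed
        qed
      qed
    qed
  qed
qed



end
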